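(* Let $k \geq 3$ be an integer and let $n$ be a $k$-admissible integer such that $2k+1 < n \leq 3k$. Any partial $k$-star design of order $n$ with three stars is completable.
   Context: A $k$-star is a copy of $K_{1,k}$. A partial $k$-star design of order $n$ is a pair $(V,\mathcal{A})$ where $V$ is a set of $n$ vertices and $\mathcal{A}$ is a set of edge-disjoint $k$-stars that are subgraphs of the complete graph $K_V$; it is completable if there is a set $\mathcal{B}\supseteq\mathcal{A}$ of edge-disjoint $k$-stars in $K_V$ covering all edges of $K_V$. A positive integer $n$ is $k$-admissible if $\binom{n}{2}\equiv 0 \pmod{k}$. *)

theory Defs
  imports Main
begin

definition complete_edges :: "'a set \<Rightarrow> 'a set set" where
  "complete_edges V = {{x, y} | x y. x \<in> V \<and> y \<in> V \<and> x \<noteq> y}"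

definition is_kstar :: "nat \<Rightarrow> 'a set \<Rightarrow> 'a set set \<Rightarrow> bool" where
  "is_kstar k V S \<longleftrightarrow> (\<exists>c L. c \<in> V \<and> L \<subseteq> V - {c} \<and> card L = k \<and> finite L
      \<and> S = (\<lambda>x. {c, x}) ` L)"

definition partial_kstar_design :: "nat \<Rightarrow> 'a set \<Rightarrow> 'a set set set \<Rightarrow> bool" where
  "partial_kstar_design k V A \<longleftrightarrow> (\<forall>S\<in>A. is_kstar k V S) \<and> pairwise disjnt A"

definition completable :: "nat \<Rightarrow> 'a set \<Rightarrow> 'a set set set \<Rightarrow> bool" where
  "completable k V A \<longleftrightarrow> (\<exists>B. A \<subseteq> B \<and> partial_kstar_design k V B
      \<and> \<Union>B = complete_edges V)"

definition admissible :: "nat \<Rightarrow> nat \<Rightarrow> bool" where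
  "admissible k n \<longleftrightarrow> (n choose 2) mod k = 0"

end

theory Submission
  imports Defs
begin


lemma choose2_twice: "2 * (m choose 2) = m * (m - 1)"
proof (induction m)
  case 0 thus ?case by simp
next
  case (Suc m)
  have "Suc m choose 2 = m + (m choose 2)" by (simp add: numeral_2_eq_2)
  thus ?case using Suc by (cases m) (simp_all add: algebra_simps)
qed

lemma adm_cases:
  assumes "k \<ge> 3" "(n choose 2) mod k = 0" "2*k+1 < n"
  shows "n \<ge> 2*k+4 \<or> (k = 3 \<and> n = 9)"
proof -
  have "n = 2*k+2 \<or> n = 2*k+3 \<or> n \<ge> 2*k+4" using assms(3) by linarith
  moreover
  { assume n: "n = 2*k+2"
    have "n choose 2 = (k+1)*(2*k+1)" using choose2_twice[of n] n by (simp add: algebra_simps)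
    also have "\<dots> = 1 + k*(2*k+3)" by (simp add: algebra_simps)
    finally have "(n choose 2) mod k = 1 mod k" using mod_mult_self2 by metis
    hence "(n choose 2) mod k = 1" using assms(1) by simp
    hence False using assms(2) by simp }
  moreover
  { assume n: "n = 2*k+3"
    have "n choose 2 = (k+1)*(2*k+3)" using choose2_twice[of n] n by (simp add: algebra_simps)
    also have "\<dots> = 3 + k*(2*k+5)" by (simp add: algebra_simps)
    finally have "(n choose 2) mod k = 3 mod k" using mod_mult_self2 by metis
    hence "k dvd 3" using assms(2) by (simp add: mod_eq_0_iff_dvd[symmetric])
    hence "k = 3" using assms(1) by (metis dvd_imp_le le_antisym zero_less_numeral)
    hence "k = 3 \<and> n = 9" using n by simp }
  ultimately show ?thesis by blast
qed

lemma e_bounds: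
  assumes "k \<ge> 3" "k * N = n choose 2" "2*k+3 \<le> n" "n \<le> 3*k"
  shows "N \<ge> n + 3" "N + k \<le> 2*n"
proof -
  have h: "2*k*N = n*(n-1)" using assms(2) choose2_twice[of n] by simp
  have "n-1 \<ge> 2*k+2" using assms(3) by simp
  hence "n*(n-1) \<ge> n*(2*k+2)" by (rule mult_le_mono2)
  moreover have "n*(2*k+2) = 2*k*n + 2*n" by (simp add: algebra_simps)
  ultimately have "2*k*N \<ge> 2*k*n + 2*n" using h by (simp only:)
  hence "k*N \<ge> k*n + n" by simp
  hence "k*N > k*n + 2*k" using assms(3) by linarith
  hence "k*N > k*(n+2)" by (simp add: algebra_simps)
  hence "N > n + 2" using mult_less_cancel1 by blast
  thus "N \<ge> n + 3" by simp
  have "n*(n-1) \<le> 2*k*(2*n - k)"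
  proof -
    define p where "p = n - 2*k"
    have p: "n = 2*k + p" "p \<le> k" using assms(3,4) unfolding p_def by auto
    have "n*(n-1) \<le> n * n" by simp
    have "2*n - k = 3*k + 2*p" using p by simp
    have "(2*k+p)*(2*k+p-1) \<le> 2*k*(3*k+2*p)"
    proof -
      have "(2*k+p)*(2*k+p-1) \<le> (2*k+p)*(2*k+p) - (2*k+p)" by (simp add: diff_mult_distrib2)
      moreover have "(2*k+p)*(2*k+p) = 4*k*k + 4*k*p + p*p" by (simp add: algebra_simps)
      moreover have "p*p \<le> k*k" using p(2) by (simp add: mult_le_mono)
      ultimately show ?thesis by (simp add: algebra_simps)
    qed
    thus ?thesis using p \<open>2*n - k = 3*k + 2*p\<close> by simp
  qed
  hence "2*k*N \<le> 2*k*(2*n-k)" using h by simp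
  hence "N \<le> 2*n - k" using assms(1) by simp
  thus "N + k \<le> 2*n" using assms(3) by arith
qed

lemma main_ineq:
  assumes "k \<ge> 3" "n \<ge> 2*k+4" "a + b \<le> n - 2*k - 1" "L \<le> 2*a + 3*b"
  shows "k*(2*a+b) + L + ((n-(a+b)) choose 2) \<le> n choose 2"
proof -
  define t where "t = a + b"
  define q where "q = n - 2*k - 1"
  have q3: "q \<ge> 3" and nq: "n = 2*k+1+q" using assms(2) unfolding q_def by auto
  have tq: "t \<le> q" using assms(3) unfolding t_def q_def by simp
  define m where "m = n - t"
  have mt: "n = m + t" using tq nq unfolding m_def by simp
  have "2 * (n choose 2) = (m+t)*(m+t-1)" using choose2_twice mt by simp
  moreover have "2 * (m choose 2) = m*(m-1)" using choose2_twice by simp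
  moreover have "(m+t)*(m+t-1) = m*(m-1) + t*(2*m + t - 1)"
  proof (cases m)
    case 0 thus ?thesis by (simp add: algebra_simps)
  next
    case (Suc m')
    thus ?thesis by (cases t) (simp_all add: algebra_simps)
  qed
  moreover have "2*(k*(2*a+b) + L) \<le> t*(2*m + t - 1)"
  proof -
    have m: "m = 2*k + 1 + (q - t)" using mt nq tq by simp
    have "2*m + t - 1 = 4*k + 2*q - t + 1" using m tq by arith
    hence e1: "t*(2*m + t - 1) = t*(4*k + 2*q - t + 1)" by simp
    have e2: "t*(4*k + q + 1) \<le> t*(4*k + 2*q - t + 1)" using tq by (intro mult_le_mono2) arith
    have e3: "t*(4*k + 4) \<le> t*(4*k + q + 1)" using q3 by (intro mult_le_mono2) simp
    have e4: "t*(4*k + 4) = t*(4*k) + t*4" by (simp add: algebra_simps)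
    have "t*(2*m+t-1) \<ge> t*(4*k) + t*4" using e1 e2 e3 e4 by linarith
    moreover have "2*(k*(2*a+b) + L) \<le> t*(4*k) + t*4"
    proof -
      have "2*(k*(2*a+b) + L) \<le> 4*k*a + 2*k*b + 4*a + 6*b" using assms(4) by (simp add: algebra_simps)
      also have "\<dots> \<le> 4*k*a + 4*k*b + 4*a + 4*b" using assms(1) by simp
      also have "\<dots> = t*(4*k) + t*4" unfolding t_def by (simp add: algebra_simps)
      finally show ?thesis .
    qed
    ultimately show ?thesis by linarith
  qed
  ultimately have "k*(2*a+b) + L + (m choose 2) \<le> n choose 2"
  proof -
    have gen: "\<And>X Y Z W P Q::nat. 2*P = X \<Longrightarrow> 2*Q = Y \<Longrightarrow> X = Y + Z \<Longrightarrow> 2*W \<le> Z \<Longrightarrow> W + Q \<le> P"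
      by linarith
    assume a1: "2 * (n choose 2) = (m + t) * (m + t - 1)" and a2: "2 * (m choose 2) = m * (m - 1)"
      and a3: "(m + t) * (m + t - 1) = m * (m - 1) + t * (2 * m + t - 1)"
      and a4: "2 * (k * (2 * a + b) + L) \<le> t * (2 * m + t - 1)"
    show ?thesis using gen[OF a1 a2 a3 a4] by simp
  qed
  thus ?thesis unfolding t_def[symmetric] m_def[symmetric] .
qed



definition edgeset :: "'a set \<Rightarrow> 'a set set" where
  "edgeset V = {e. \<exists>x y. e = {x,y} \<and> x \<noteq> y \<and> x \<in> V \<and> y \<in> V}"

lemma edge_not_sub_single: "e \<in> edgeset V \<Longrightarrow> \<not> e \<subseteq> {u}"
  unfolding edgeset_def by auto

lemma hakimi_step:
  fixes E F :: "'a set set" and d :: "'a \<Rightarrow> nat"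
  assumes fin: "finite V" "finite F" and E: "E = insert {u,v} F" "{u,v} \<notin> F"
    and sub: "E \<subseteq> edgeset V" and uv: "u \<noteq> v" "u \<in> V" "v \<in> V"
    and sumd: "sum d V = card E"
    and cond: "\<forall>S\<subseteq>V. card {e\<in>E. e \<subseteq> S} \<le> sum d S"
    and notight: "\<not> (\<exists>S\<subseteq>V. u \<in> S \<and> v \<notin> S \<and> card {e\<in>E. e \<subseteq> S} = sum d S)"
    and IH: "\<And>d'. sum d' V = card F \<Longrightarrow> (\<forall>S\<subseteq>V. card {e\<in>F. e \<subseteq> S} \<le> sum d' S)
              \<Longrightarrow> \<exists>h. (\<forall>e\<in>F. h e \<in> e) \<and> (\<forall>w\<in>V. card {e\<in>F. h e = w} = d' w)"
  shows "\<exists>h. (\<forall>e\<in>E. h e \<in> e) \<and> (\<forall>w\<in>V. card {e\<in>E. h e = w} = d w)"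
proof -
  have finE: "finite E" using E fin by simp
  have du: "d u \<ge> 1"
  proof (rule ccontr)
    assume "\<not> d u \<ge> 1"
    hence "d u = 0" by simp
    moreover have "{e\<in>E. e \<subseteq> {u}} = {}"
    proof -
      { fix x assume "x \<in> E" "x \<subseteq> {u}"
        hence False using sub edge_not_sub_single[of x V u] by blast }
      thus ?thesis by blast
    qed
    ultimately have "card {e\<in>E. e \<subseteq> {u}} = sum d {u}" by simp
    hence "\<exists>S\<subseteq>V. u \<in> S \<and> v \<notin> S \<and> card {e\<in>E. e \<subseteq> S} = sum d S"
      using uv by (intro exI[of _ "{u}"]) auto
    thus False using notight by blast
  qed
  define d' where "d' = d(u := d u - 1)"
  have sd': "sum d' S = (if u \<in> S then sum d S - 1 else sum d S)" if "S \<subseteq> V" for S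
  proof -
    have fS: "finite S" using that fin finite_subset by blast
    show ?thesis
    proof (cases "u \<in> S")
      case True
      have "sum d' S = d' u + sum d' (S - {u})" using True fS by (simp add: sum.remove)
      also have "sum d' (S - {u}) = sum d (S - {u})" unfolding d'_def by (rule sum.cong) auto
      also have "sum d S = d u + sum d (S - {u})" using True fS by (simp add: sum.remove)
      ultimately show ?thesis using True du unfolding d'_def by simp
    next
      case False
      have "sum d' S = sum d S" unfolding d'_def using False by (intro sum.cong) auto
      thus ?thesis using False by simp
    qed
  qed
  have cardE: "card E = Suc (card F)" using E fin by simp
  have h1: "sum d' V = card F" using sd'[of V] uv sumd cardE by simp
  have h2: "\<forall>S\<subseteq>V. card {e\<in>F. e \<subseteq> S} \<le> sum d' S"
  proof (intro allI impI)
    fix S assume S: "S \<subseteq> V"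
    have fS: "finite S" using S fin finite_subset by blast
    have FE: "{e\<in>F. e \<subseteq> S} \<subseteq> {e\<in>E. e \<subseteq> S}" using E by auto
    have finES: "finite {e\<in>E. e \<subseteq> S}" using finE by simp
    show "card {e\<in>F. e \<subseteq> S} \<le> sum d' S"
    proof (cases "u \<in> S")
      case False
      have "card {e\<in>E. e \<subseteq> S} \<le> sum d S" using cond S by blast
      thus ?thesis using sd'[OF S] False card_mono[OF finES FE] by simp
    next
      case True
      show ?thesis
      proof (cases "v \<in> S")
        case True
        have "{e\<in>E. e \<subseteq> S} = insert {u,v} {e\<in>F. e \<subseteq> S}" unfolding E(1) using True \<open>u \<in> S\<close> by blast
        hence "card {e\<in>E. e \<subseteq> S} = Suc (card {e\<in>F. e \<subseteq> S})" using E(2) fin(2) by simp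
        moreover have "card {e\<in>E. e \<subseteq> S} \<le> sum d S" using cond S by blast
        ultimately show ?thesis using sd'[OF S] \<open>u \<in> S\<close> by simp
      next
        case False
        have "card {e\<in>E. e \<subseteq> S} \<noteq> sum d S" using notight S \<open>u\<in>S\<close> False by blast
        moreover have "card {e\<in>E. e \<subseteq> S} \<le> sum d S" using cond S by blast
        ultimately have "card {e\<in>E. e \<subseteq> S} < sum d S" by simp
        thus ?thesis using sd'[OF S] \<open>u \<in> S\<close> card_mono[OF finES FE] by simp
      qed
    qed
  qed
  obtain h where h: "\<forall>e\<in>F. h e \<in> e" "\<forall>w\<in>V. card {e\<in>F. h e = w} = d' w"
    using IH[OF h1 h2] by blast
  define g where "g = h({u,v} := u)"
  have "\<forall>e\<in>E. g e \<in> e" using h E unfolding g_def by auto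
  moreover have "\<forall>w\<in>V. card {e\<in>E. g e = w} = d w"
  proof
    fix w assume w: "w \<in> V"
    show "card {e\<in>E. g e = w} = d w"
    proof (cases "w = u")
      case True
      have "{e\<in>E. g e = w} = insert {u,v} {e\<in>F. h e = w}" using E True unfolding g_def by auto
      hence "card {e\<in>E. g e = w} = Suc (card {e\<in>F. h e = w})" using E fin by simp
      thus ?thesis using h(2) w True du unfolding d'_def by simp
    next
      case False
      have "{e\<in>E. g e = w} = {e\<in>F. h e = w}" using E False unfolding g_def by auto
      thus ?thesis using h(2) w False unfolding d'_def by simp
    qed
  qed
  ultimately show ?thesis by blast
qed

lemma hakimi_aux:
  fixes E :: "'a set set"
  assumes "finite E" "finite V"
  shows "E \<subseteq> edgeset V \<Longrightarrow> sum d V = card E \<Longrightarrow> (\<forall>S\<subseteq>V. card {e\<in>E. e \<subseteq> S} \<le> sum d S)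
     \<Longrightarrow> \<exists>h. (\<forall>e\<in>E. h e \<in> e) \<and> (\<forall>w\<in>V. card {e\<in>E. h e = w} = d w)"
  using assms(1)
proof (induction E arbitrary: d rule: finite_induct)
  case empty
  hence "\<forall>w\<in>V. d w = 0" using assms(2) by simp
  thus ?case by simp
next
  case (insert e F)
  obtain u v where e: "e = {u,v}" "u \<noteq> v" "u \<in> V" "v \<in> V"
    using insert.prems(1) unfolding edgeset_def by auto
  have IH: "\<And>d'. sum d' V = card F \<Longrightarrow> (\<forall>S\<subseteq>V. card {e\<in>F. e \<subseteq> S} \<le> sum d' S)
              \<Longrightarrow> \<exists>h. (\<forall>e\<in>F. h e \<in> e) \<and> (\<forall>w\<in>V. card {e\<in>F. h e = w} = d' w)"
    using insert.IH insert.prems(1) by blast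
  let ?E = "insert e F"
  let ?g = "\<lambda>S. card {x\<in>?E. x \<subseteq> S}"
  show ?case
  proof (cases "\<exists>S\<subseteq>V. u \<in> S \<and> v \<notin> S \<and> ?g S = sum d S")
    case False
    have nin: "{u,v} \<notin> F" using insert(2) e by simp
    show ?thesis unfolding e
      by (rule hakimi_step[OF assms(2) insert(1) refl nin insert.prems(1)[unfolded e] e(2-4)
            insert.prems(2)[unfolded e] insert.prems(3)[unfolded e] False[unfolded e] IH])
  next
    case True
    then obtain S1 where S1: "S1 \<subseteq> V" "u \<in> S1" "v \<notin> S1" "?g S1 = sum d S1" by blast
    show ?thesis
    proof (cases "\<exists>S\<subseteq>V. v \<in> S \<and> u \<notin> S \<and> ?g S = sum d S")
      case False
      have e': "e = {v,u}" using e by auto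
      have nin: "{v,u} \<notin> F" using insert(2) e' by simp
      show ?thesis unfolding e'
        by (rule hakimi_step[OF assms(2) insert(1) refl nin insert.prems(1)[unfolded e'] _ e(4) e(3)
            insert.prems(2)[unfolded e'] insert.prems(3)[unfolded e'] False[unfolded e'] IH]) (use e e' in auto)
    next
      case True
      then obtain S2 where S2: "S2 \<subseteq> V" "v \<in> S2" "u \<notin> S2" "?g S2 = sum d S2" by blast
      have finE: "finite ?E" using insert by simp
      let ?X1 = "{x\<in>?E. x \<subseteq> S1}" and ?X2 = "{x\<in>?E. x \<subseteq> S2}"
      have fX: "finite ?X1" "finite ?X2" using finE by auto
      have "?X1 \<inter> ?X2 = {x\<in>?E. x \<subseteq> S1 \<inter> S2}" by auto
      moreover have "insert e (?X1 \<union> ?X2) \<subseteq> {x\<in>?E. x \<subseteq> S1 \<union> S2}" using e S1 S2 by auto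
      moreover have "e \<notin> ?X1 \<union> ?X2" using e S1 S2 by auto
      ultimately have "card (?X1 \<union> ?X2) + card (?X1 \<inter> ?X2) = ?g S1 + ?g S2"
        and "Suc (card (?X1 \<union> ?X2)) \<le> ?g (S1 \<union> S2)"
        using card_Un_Int[OF fX] apply simp
        by (metis (no_types, lifting) \<open>e \<notin> ?X1 \<union> ?X2\<close> \<open>insert e (?X1 \<union> ?X2) \<subseteq> _\<close> card_insert_disjoint card_mono finE finite_Un fX mem_Collect_eq finite_subset subsetI)
      moreover have "?g (S1 \<union> S2) \<le> sum d (S1 \<union> S2)" using insert.prems(3) S1 S2 by auto
      moreover have "?g (S1 \<inter> S2) \<le> sum d (S1 \<inter> S2)" using insert.prems(3) S1(1) by (meson inf.coboundedI1)
      moreover have "sum d (S1 \<union> S2) + sum d (S1 \<inter> S2) = sum d S1 + sum d S2"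
        using sum.union_inter[of S1 S2 d] S1 S2 assms(2) finite_subset by blast
      ultimately show ?thesis using S1 S2 \<open>?X1 \<inter> ?X2 = _\<close> by simp
    qed
  qed
qed



lemma split_blocks:
  "finite Q \<Longrightarrow> card Q = k * j \<Longrightarrow> \<exists>P. \<Union>P = Q \<and> pairwise disjnt P \<and> (\<forall>B\<in>P. card B = k)"
proof (induction j arbitrary: Q)
  case 0
  hence "Q = {}" by simp
  thus ?case by (intro exI[of _ "{}"]) auto
next
  case (Suc j)
  obtain B where B: "B \<subseteq> Q" "card B = k" "finite B"
    using obtain_subset_with_card_n[of k Q] Suc.prems by auto
  have "card (Q - B) = k * j" using Suc.prems B by (simp add: card_Diff_subset)
  then obtain P where P: "\<Union>P = Q - B" "pairwise disjnt P" "\<forall>B\<in>P. card B = k"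
    using Suc.IH[of "Q - B"] Suc.prems by auto
  have "pairwise disjnt (insert B P)"
    using P(1,2) unfolding pairwise_def disjnt_def by blast
  moreover have "\<Union>(insert B P) = Q" using P(1) B(1) by auto
  ultimately show ?case using P(3) B(2) by (intro exI[of _ "insert B P"]) auto
qed

lemma block_star:
  assumes "B \<subseteq> complete_edges V" "\<forall>x\<in>B. v \<in> x" "card B = k" "v \<in> V" "finite B"
  shows "is_kstar k V B"
proof -
  define L where "L = {y\<in>V. {v,y} \<in> B}"
  have vL: "v \<notin> L"
  proof
    assume "v \<in> L"
    hence "{v} \<in> complete_edges V" using assms(1) unfolding L_def by auto
    thus False unfolding complete_edges_def by (auto simp: doubleton_eq_iff)
  qed
  have img: "B = (\<lambda>x. {v,x}) ` L"
  proof
    show "B \<subseteq> (\<lambda>x. {v,x}) ` L"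
    proof
      fix x assume x: "x \<in> B"
      then obtain a b where ab: "x = {a,b}" "a \<in> V" "b \<in> V" "a \<noteq> b"
        using assms(1) unfolding complete_edges_def by blast
      have "v \<in> x" using assms(2) x by blast
      hence "x = {v,a} \<or> x = {v,b}" using ab by auto
      thus "x \<in> (\<lambda>x. {v,x}) ` L"
      proof
        assume xa: "x = {v,a}"
        hence "a \<in> L" using x ab(2) unfolding L_def by simp
        thus ?thesis using xa by (rule rev_image_eqI)
      next
        assume xb: "x = {v,b}"
        hence "b \<in> L" using x ab(3) unfolding L_def by simp
        thus ?thesis using xb by (rule rev_image_eqI)
      qed
    qed
  next
    show "(\<lambda>x. {v,x}) ` L \<subseteq> B" unfolding L_def by auto
  qed
  have inj: "inj_on (\<lambda>x. {v,x}) L"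
    using vL unfolding inj_on_def by (auto simp: doubleton_eq_iff)
  have fL: "finite L"
  proof -
    have "finite B" using assms(5) .
    thus ?thesis using img inj finite_imageD by metis
  qed
  have "card L = k" using img inj assms(3) card_image by metis
  moreover have "L \<subseteq> V - {v}" using vL unfolding L_def by auto
  ultimately show ?thesis unfolding is_kstar_def using assms(4) img fL by blast
qed


lemma complete_from_orient:
  assumes fin: "finite V" and des: "partial_kstar_design k V A"
    and UA: "\<Union>A \<subseteq> complete_edges V"
    and h: "\<forall>e\<in>complete_edges V - \<Union>A. h e \<in> e"
    and cnt: "\<forall>v\<in>V. card {e\<in>complete_edges V - \<Union>A. h e = v} = k * w v"
  shows "completable k V A"
proof -
  let ?E = "complete_edges V - \<Union>A"
  have finK: "finite (complete_edges V)"
  proof -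
    have "complete_edges V \<subseteq> Pow V" unfolding complete_edges_def by blast
    thus ?thesis by (rule finite_subset) (simp add: fin)
  qed
  have KV: "\<forall>e\<in>complete_edges V. e \<subseteq> V" unfolding complete_edges_def by blast
  have "\<forall>v\<in>V. \<exists>P. \<Union>P = {e\<in>?E. h e = v} \<and> pairwise disjnt P \<and> (\<forall>B\<in>P. card B = k)"
  proof
    fix v assume "v \<in> V"
    show "\<exists>P. \<Union>P = {e\<in>?E. h e = v} \<and> pairwise disjnt P \<and> (\<forall>B\<in>P. card B = k)"
      by (rule split_blocks) (use finK cnt \<open>v \<in> V\<close> in auto)
  qed
  then obtain Pf where Pf: "\<forall>v\<in>V. \<Union>(Pf v) = {e\<in>?E. h e = v} \<and> pairwise disjnt (Pf v) \<and> (\<forall>B\<in>Pf v. card B = k)"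
    by metis
  define BB where "BB = A \<union> (\<Union>v\<in>V. Pf v)"
  have star: "\<forall>S\<in>BB. is_kstar k V S"
  proof
    fix S assume "S \<in> BB"
    show "is_kstar k V S"
    proof (cases "S \<in> A")
      case True thus ?thesis using des unfolding partial_kstar_design_def by blast
    next
      case False
      then obtain v where v: "v \<in> V" "S \<in> Pf v" using \<open>S \<in> BB\<close> unfolding BB_def by blast
      have Ssub: "S \<subseteq> {e\<in>?E. h e = v}" using Pf v by blast
      show ?thesis
      proof (rule block_star[of S V v k])
        show "S \<subseteq> complete_edges V" using Ssub by blast
        show "\<forall>x\<in>S. v \<in> x"
        proof
          fix x assume "x \<in> S"
          hence xE: "x \<in> ?E" and hx: "h x = v" using Ssub by auto
          show "v \<in> x" using h[rule_format, OF xE] hx by simp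
        qed
        show "card S = k" using Pf v by blast
        show "v \<in> V" by fact
        have "finite {e\<in>?E. h e = v}" using finK by simp
        thus "finite S" using Ssub by (rule finite_subset[rotated])
      qed
    qed
  qed
  have disj: "pairwise disjnt BB"
  proof (unfold pairwise_def, intro ballI impI)
    fix S1 S2 assume S: "S1 \<in> BB" "S2 \<in> BB" "S1 \<noteq> S2"
    have Aside: "disjnt S1 S2" if "S1 \<in> A" "S2 \<in> Pf v" "v \<in> V" for S1 S2 v
    proof -
      have "S2 \<subseteq> ?E" using Pf that by blast
      thus ?thesis using that unfolding disjnt_def by blast
    qed
    show "disjnt S1 S2"
    proof (cases "S1 \<in> A")
      case True
      show ?thesis
      proof (cases "S2 \<in> A")
        case True thus ?thesis using \<open>S1 \<in> A\<close> S(3) des unfolding partial_kstar_design_def pairwise_def by blast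
      next
        case False
        then obtain v where "v \<in> V" "S2 \<in> Pf v" using S(2) unfolding BB_def by blast
        thus ?thesis using Aside True by blast
      qed
    next
      case False
      then obtain v where v: "v \<in> V" "S1 \<in> Pf v" using S(1) unfolding BB_def by blast
      show ?thesis
      proof (cases "S2 \<in> A")
        case True thus ?thesis using Aside v disjnt_sym by metis
      next
        case False
        then obtain u where u: "u \<in> V" "S2 \<in> Pf u" using S(2) unfolding BB_def by blast
        show ?thesis
        proof (cases "u = v")
          case True thus ?thesis using Pf u v S(3) unfolding pairwise_def by blast
        next
          case False
          have "S1 \<subseteq> {e\<in>?E. h e = v}" "S2 \<subseteq> {e\<in>?E. h e = u}" using Pf u v by blast+
          thus ?thesis using False unfolding disjnt_def by blast
        qed
      qed
    qed
  qed
  have cover: "\<Union>BB = complete_edges V"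
  proof
    show "\<Union>BB \<subseteq> complete_edges V" unfolding BB_def using UA Pf by blast
  next
    show "complete_edges V \<subseteq> \<Union>BB"
    proof
      fix e assume e: "e \<in> complete_edges V"
      show "e \<in> \<Union>BB"
      proof (cases "e \<in> \<Union>A")
        case True thus ?thesis unfolding BB_def by blast
      next
        case False
        hence eE: "e \<in> ?E" using e by blast
        hence "h e \<in> V" using h KV e by blast
        moreover have "e \<in> \<Union>(Pf (h e))" using Pf eE calculation by blast
        ultimately show ?thesis unfolding BB_def by blast
      qed
    qed
  qed
  show ?thesis unfolding completable_def partial_kstar_design_def
    using star disj cover by (intro exI[of _ BB]) (auto simp: BB_def)
qed



lemma small_ineq:
  assumes "a + b \<le> (2::nat)" "L \<le> 2*a + 3*b" "L \<le> (a+b)*(3-a)"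
  shows "3*(2*a+b) + L + ((9-(a+b)) choose 2) \<le> 36"
proof -
  have "a = 0 \<or> a = 1 \<or> a = 2" "b = 0 \<or> b = 1 \<or> b = 2" using assms(1) by auto
  thus ?thesis using assms by (elim disjE) (auto simp: choose_two)
qed

lemma complete_edges_eq: "complete_edges V = {B. B \<subseteq> V \<and> card B = 2}"
  unfolding complete_edges_def by (auto simp: card_2_iff)

lemma card_complete_edges: "finite V \<Longrightarrow> card (complete_edges V) = card V choose 2"
  by (simp add: complete_edges_eq n_subsets)

lemma card_as_sum: "finite J \<Longrightarrow> card {j\<in>J. P j} = (\<Sum>j\<in>J. if P j then 1 else (0::nat))"
  by (simp add: sum.If_cases Int_def conj_commute)

lemma swap_card: "finite I \<Longrightarrow> finite J \<Longrightarrow> (\<Sum>i\<in>I. card {j\<in>J. P i j}) = (\<Sum>j\<in>J. card {i\<in>I. P i j})"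
  by (simp add: card_as_sum sum.swap[of _ I J])

locale cfg =
  fixes k n :: nat and V :: "'a set" and A :: "'a set set set"
    and cen :: "'a set set \<Rightarrow> 'a" and lvs :: "'a set set \<Rightarrow> 'a set"
  assumes k3: "k \<ge> 3" and adm: "(n choose 2) mod k = 0" and nlo: "2*k+1 < n" and nhi: "n \<le> 3*k"
    and finV: "finite V" and cardV: "card V = n" and disjA: "pairwise disjnt A" and cardA: "card A = 3"
    and st_cen: "\<And>\<sigma>. \<sigma> \<in> A \<Longrightarrow> cen \<sigma> \<in> V"
    and st_lvs: "\<And>\<sigma>. \<sigma> \<in> A \<Longrightarrow> lvs \<sigma> \<subseteq> V - {cen \<sigma>}"
    and st_card: "\<And>\<sigma>. \<sigma> \<in> A \<Longrightarrow> card (lvs \<sigma>) = k"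
    and st_fin: "\<And>\<sigma>. \<sigma> \<in> A \<Longrightarrow> finite (lvs \<sigma>)"
    and st_img: "\<And>\<sigma>. \<sigma> \<in> A \<Longrightarrow> \<sigma> = (\<lambda>x. {cen \<sigma>, x}) ` lvs \<sigma>"
begin

lemma mem_iff: assumes "\<sigma> \<in> A" shows "(z \<in> \<sigma>) = (\<exists>y\<in>lvs \<sigma>. z = {cen \<sigma>, y})"
proof -
  have "(z \<in> \<sigma>) = (z \<in> (\<lambda>x. {cen \<sigma>, x}) ` lvs \<sigma>)"
    using st_img[OF assms] by (rule arg_cong[where f="\<lambda>s. z \<in> s"])
  thus ?thesis by blast
qed

lemma fin_star: "\<sigma> \<in> A \<Longrightarrow> finite \<sigma>"
proof -
  assume a: "\<sigma> \<in> A"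
  have "finite ((\<lambda>x. {cen \<sigma>, x}) ` lvs \<sigma>)" using st_fin[OF a] by simp
  thus ?thesis using st_img[OF a, symmetric] by (rule back_subst[where P=finite])
qed

lemma finA: "finite A" using cardA card.infinite by fastforce

lemma mem_star: assumes "\<sigma> \<in> A" shows "({cen \<sigma>, x} \<in> \<sigma>) = (x \<in> lvs \<sigma>)"
proof
  assume "{cen \<sigma>, x} \<in> \<sigma>"
  then obtain y where y: "y \<in> lvs \<sigma>" "{cen \<sigma>, x} = {cen \<sigma>, y}" using mem_iff[OF assms] by blast
  have "y \<noteq> cen \<sigma>" using y st_lvs[OF assms] by blast
  thus "x \<in> lvs \<sigma>" using y by (auto simp: doubleton_eq_iff)
next
  assume "x \<in> lvs \<sigma>" thus "{cen \<sigma>, x} \<in> \<sigma>" using mem_iff[OF assms] by blast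
qed

lemma star_edges: "\<sigma> \<in> A \<Longrightarrow> \<sigma> \<subseteq> complete_edges V"
proof -
  assume sA: "\<sigma> \<in> A"
  show ?thesis
proof
  fix z assume "z \<in> \<sigma>"
  with sA obtain y where "y \<in> lvs \<sigma>" "z = {cen \<sigma>, y}" using mem_iff by blast
  thus "z \<in> complete_edges V" using st_lvs[OF sA] st_cen[OF sA]
    unfolding complete_edges_def by blast
qed
qed

lemma inj_star: "\<sigma> \<in> A \<Longrightarrow> inj_on (\<lambda>x. {cen \<sigma>, x}) (lvs \<sigma>)"
  using st_lvs[of \<sigma>] unfolding inj_on_def by (auto simp: doubleton_eq_iff)

lemma card_star: "\<sigma> \<in> A \<Longrightarrow> card \<sigma> = k"
proof -
  assume a: "\<sigma> \<in> A"
  have "card ((\<lambda>x. {cen \<sigma>, x}) ` lvs \<sigma>) = k" using card_image[OF inj_star[OF a]] st_card[OF a] by simp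
  thus ?thesis using st_img[OF a, symmetric] by (rule back_subst[where P="\<lambda>s. card s = k"])
qed


lemma same_center:
  assumes "\<sigma> \<in> A" "\<tau> \<in> A" "cen \<sigma> = cen \<tau>" "x \<in> lvs \<sigma>" "x \<in> lvs \<tau>"
  shows "\<sigma> = \<tau>"
proof (rule ccontr)
  assume "\<sigma> \<noteq> \<tau>"
  hence "disjnt \<sigma> \<tau>" using disjA assms unfolding pairwise_def by blast
  moreover have "{cen \<sigma>, x} \<in> \<sigma>" using mem_star[OF assms(1)] assms(4) by blast
  moreover have "{cen \<tau>, x} \<in> \<tau>" using mem_star[OF assms(2)] assms(5) by blast
  ultimately show False using assms(3) unfolding disjnt_def by auto
qed

definition cnt :: "'a \<Rightarrow> nat" where "cnt v = card {\<sigma>\<in>A. cen \<sigma> = v}"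

lemma sum_cnt: assumes "finite T" shows "(\<Sum>v\<in>T. cnt v) = card {\<sigma>\<in>A. cen \<sigma> \<in> T}"
proof -
  have "{\<sigma>\<in>A. cen \<sigma> \<in> T} = (\<Union>v\<in>T. {\<sigma>\<in>A. cen \<sigma> = v})" by auto
  hence "card {\<sigma>\<in>A. cen \<sigma> \<in> T} = (\<Sum>v\<in>T. card {\<sigma>\<in>A. cen \<sigma> = v})"
    using card_UN_disjoint[OF assms, of "\<lambda>v. {\<sigma>\<in>A. cen \<sigma> = v}"] finA by auto
  thus ?thesis unfolding cnt_def by simp
qed

lemma cnt_le2: "cnt v \<le> 2"
proof (rule ccontr)
  assume "\<not> cnt v \<le> 2"
  hence c3: "card {\<sigma>\<in>A. cen \<sigma> = v} \<ge> 3" unfolding cnt_def by simp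
  have "{\<sigma>\<in>A. cen \<sigma> = v} = A"
    using card_subset_eq[OF finA, of "{\<sigma>\<in>A. cen \<sigma> = v}"] c3 cardA card_mono[OF finA, of "{\<sigma>\<in>A. cen \<sigma> = v}"]
    by auto
  hence cv: "\<forall>\<sigma>\<in>A. cen \<sigma> = v" by blast
  obtain \<sigma>0 where "\<sigma>0 \<in> A" using cardA by fastforce
  hence vV: "v \<in> V" using st_cen cv by metis
  have "card (\<Union>\<sigma>\<in>A. lvs \<sigma>) = (\<Sum>\<sigma>\<in>A. card (lvs \<sigma>))"
  proof (rule card_UN_disjoint[OF finA])
    show "\<forall>i\<in>A. finite (lvs i)" using st_fin by blast
    show "\<forall>i\<in>A. \<forall>j\<in>A. i \<noteq> j \<longrightarrow> lvs i \<inter> lvs j = {}"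
    proof (intro ballI impI)
      fix i j assume ij: "i \<in> A" "j \<in> A" "i \<noteq> j"
      show "lvs i \<inter> lvs j = {}"
      proof (rule ccontr)
        assume "lvs i \<inter> lvs j \<noteq> {}"
        then obtain x where "x \<in> lvs i" "x \<in> lvs j" by blast
        moreover have "cen i = cen j" using cv ij by simp
        ultimately show False using same_center[OF ij(1,2)] ij(3) by blast
      qed
    qed
  qed
  also have "\<dots> = 3*k" using st_card cardA by simp
  finally have "card (\<Union>\<sigma>\<in>A. lvs \<sigma>) = 3*k" .
  moreover have "(\<Union>\<sigma>\<in>A. lvs \<sigma>) \<subseteq> V - {v}"
  proof (rule UN_least)
    fix \<sigma> assume "\<sigma> \<in> A" thus "lvs \<sigma> \<subseteq> V - {v}" using st_lvs[of \<sigma>] cv by simp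
  qed
  hence "card (\<Union>\<sigma>\<in>A. lvs \<sigma>) \<le> n - 1" using card_mono[of "V - {v}"] finV cardV vV by fastforce
  ultimately show False using nhi nlo by simp
qed

definition Cs where "Cs = cen ` A"

lemma Cs_V: "Cs \<subseteq> V" unfolding Cs_def using st_cen by blast
lemma card_Cs: "card Cs \<le> 3" unfolding Cs_def using card_image_le[OF finA, of cen] cardA by simp
lemma fin_Cs: "finite Cs" unfolding Cs_def using finA by simp
lemma cnt_out: "v \<notin> Cs \<Longrightarrow> cnt v = 0"
proof -
  assume "v \<notin> Cs"
  hence "{\<sigma>\<in>A. cen \<sigma> = v} = {}" unfolding Cs_def by force
  thus ?thesis unfolding cnt_def by (metis card.empty)
qed

lemma sum_cnt_V: "(\<Sum>v\<in>V. cnt v) = 3"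
proof -
  have "{\<sigma>\<in>A. cen \<sigma> \<in> V} = A" using st_cen by blast
  thus ?thesis using sum_cnt[OF finV] cardA by simp
qed

definition lc :: "'a \<Rightarrow> nat" where "lc v = card {\<sigma>\<in>A. v \<in> lvs \<sigma>}"

lemma lc_le3: "lc v \<le> 3" unfolding lc_def using card_mono[OF finA] cardA by (metis (no_types, lifting) mem_Collect_eq subsetI)

lemma lc_le2: assumes "\<sigma>0 \<in> A" "v \<notin> lvs \<sigma>0" shows "lc v \<le> 2"
proof -
  have "{\<sigma>\<in>A. v \<in> lvs \<sigma>} \<subseteq> A - {\<sigma>0}" using assms by blast
  hence "lc v \<le> card (A - {\<sigma>0})" unfolding lc_def using finA by (meson card_mono finite_Diff)
  thus ?thesis using cardA assms(1) finA by simp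
qed

definition Bad where "Bad = {v\<in>V. \<forall>\<sigma>\<in>A. v \<in> lvs \<sigma>}"

lemma card_Bad: "card Bad \<le> k"
proof -
  obtain \<sigma>0 where s: "\<sigma>0 \<in> A" using cardA by fastforce
  have "Bad \<subseteq> lvs \<sigma>0" unfolding Bad_def using s by blast
  thus ?thesis using st_card[OF s] st_fin[OF s] card_mono by metis
qed

lemma fin_Bad: "finite Bad" unfolding Bad_def using finV by simp

definition NN where "NN = (n choose 2) div k"
definition ee where "ee = NN - n"

lemma kNN: "k * NN = n choose 2"
  unfolding NN_def using adm by (metis mult_div_mod_eq add_0_right)

lemma n_ge: "n \<ge> 2*k+3" using adm_cases[OF k3 adm nlo] by auto

lemma ee_ge3: "ee \<ge> 3" and ee_le: "ee + k \<le> n" and NN_eq: "NN = n + ee"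
  using e_bounds[OF k3 kNN n_ge nhi] unfolding ee_def by auto

lemma X_exists: "\<exists>X. X \<subseteq> V - (Cs \<union> Bad) \<and> card X = ee - card Cs \<and> finite X"
proof -
  have "card (Cs \<union> Bad) \<le> card Cs + k" using card_Un_le[of Cs Bad] card_Bad by simp
  hence "card (V - (Cs \<union> Bad)) \<ge> n - (card Cs + k)"
    using diff_card_le_card_Diff[of "Cs \<union> Bad" V] fin_Cs fin_Bad cardV by simp
  moreover have "n - (card Cs + k) \<ge> ee - card Cs" using ee_le card_Cs ee_ge3 by simp
  ultimately show ?thesis using obtain_subset_with_card_n by (metis le_trans)
qed

definition X where "X = (SOME X. X \<subseteq> V - (Cs \<union> Bad) \<and> card X = ee - card Cs \<and> finite X)"

lemma X_props: "X \<subseteq> V - (Cs \<union> Bad)" "card X = ee - card Cs" "finite X"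
  using someI_ex[OF X_exists] unfolding X_def[symmetric] by auto

definition A2 where "A2 = Cs \<union> X"

lemma A2_V: "A2 \<subseteq> V" unfolding A2_def using Cs_V X_props by blast
lemma card_A2: "card A2 = ee"
proof -
  have "Cs \<inter> X = {}" using X_props by blast
  hence "card A2 = card Cs + card X" unfolding A2_def using card_Un_disjoint fin_Cs X_props(3) by blast
  thus ?thesis using X_props(2) card_Cs ee_ge3 by simp
qed
lemma fin_A2: "finite A2" unfolding A2_def using fin_Cs X_props by simp

lemma lc_A2: assumes "v \<in> A2" shows "lc v \<le> 2"
proof (cases "v \<in> Cs")
  case True
  then obtain \<sigma>0 where "\<sigma>0 \<in> A" "v = cen \<sigma>0" unfolding Cs_def by blast
  hence "v \<notin> lvs \<sigma>0" using st_lvs by blast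
  thus ?thesis using lc_le2 \<open>\<sigma>0 \<in> A\<close> by blast
next
  case False
  hence "v \<in> X" using assms unfolding A2_def by blast
  hence "v \<in> V" "v \<notin> Bad" using X_props by auto
  then obtain \<sigma>0 where "\<sigma>0 \<in> A" "v \<notin> lvs \<sigma>0" unfolding Bad_def by blast
  thus ?thesis using lc_le2 by blast
qed

definition wt :: "'a \<Rightarrow> nat" where "wt v = (if v \<in> A2 then 2 else 1) - cnt v"

lemma wt_cnt: "wt v + cnt v = (if v \<in> A2 then 2 else 1)"
proof (cases "v \<in> A2")
  case True thus ?thesis unfolding wt_def using cnt_le2[of v] by simp
next
  case False
  hence "v \<notin> Cs" unfolding A2_def by blast
  thus ?thesis using False cnt_out unfolding wt_def by simp
qed

lemma sum_base: assumes "finite T"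
  shows "(\<Sum>v\<in>T. (if v \<in> A2 then 2 else 1::nat)) = 2 * card (T \<inter> A2) + card (T - A2)"
proof -
  have "(\<Sum>v\<in>T. (if v \<in> A2 then 2 else 1::nat)) = (\<Sum>v\<in>T \<inter> A2. (if v \<in> A2 then 2 else 1::nat)) + (\<Sum>v\<in>T - A2. (if v \<in> A2 then 2 else 1::nat))"
    using sum.Int_Diff[OF assms] by blast
  thus ?thesis by simp
qed

lemma sum_wt: assumes "finite T"
  shows "(\<Sum>v\<in>T. wt v) + card {\<sigma>\<in>A. cen \<sigma> \<in> T} = 2 * card (T \<inter> A2) + card (T - A2)"
proof -
  have "(\<Sum>v\<in>T. wt v) + card {\<sigma>\<in>A. cen \<sigma> \<in> T} = (\<Sum>v\<in>T. wt v + cnt v)"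
    using sum_cnt[OF assms] by (simp add: sum.distrib)
  also have "\<dots> = (\<Sum>v\<in>T. (if v \<in> A2 then 2 else 1::nat))" using wt_cnt by simp
  finally show ?thesis using sum_base[OF assms] by simp
qed

lemma sum_wt_V: "(\<Sum>v\<in>V. wt v) = n + ee - 3"
proof -
  have "{\<sigma>\<in>A. cen \<sigma> \<in> V} = A" using st_cen by blast
  hence "(\<Sum>v\<in>V. wt v) + 3 = 2 * card (V \<inter> A2) + card (V - A2)" using sum_wt[OF finV] cardA by simp
  moreover have "V \<inter> A2 = A2" using A2_V by blast
  moreover have "card (V - A2) = n - ee" using card_Diff_subset[OF fin_A2 A2_V] card_A2 cardV by simp
  ultimately show ?thesis using card_A2 ee_le by simp
qed

definition EE where "EE = complete_edges V - \<Union>A"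

lemma UA_sub: "\<Union>A \<subseteq> complete_edges V" using star_edges by blast

lemma card_UA: "card (\<Union>A) = 3*k"
proof -
  have "card (\<Union>A) = sum card A" using card_Union_disjoint[OF disjA] fin_star by blast
  also have "\<dots> = 3*k" using card_star cardA by simp
  finally show ?thesis .
qed

lemma fin_K: "finite (complete_edges V)"
  using finV unfolding complete_edges_eq by simp

lemma card_EE: "card EE = (n choose 2) - 3*k"
  unfolding EE_def using card_Diff_subset[OF finite_subset[OF UA_sub fin_K] UA_sub]
    card_complete_edges[OF finV] cardV card_UA by simp

lemma sum_d_V: "(\<Sum>v\<in>V. k * wt v) = card EE"
proof -
  have "(\<Sum>v\<in>V. k * wt v) = k * (n + ee - 3)" using sum_wt_V by (simp add: sum_distrib_left[symmetric])
  also have "\<dots> = k * NN - 3*k" using NN_eq ee_ge3 by (simp add: diff_mult_distrib2)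
  finally show ?thesis using card_EE kNN by simp
qed


lemma EE_sub: "EE \<subseteq> {B. B \<subseteq> V \<and> card B = 2}" unfolding EE_def complete_edges_eq by blast

lemma cond_small:
  assumes S: "S \<subseteq> V" and s: "card S \<le> 2*k"
  shows "card {e\<in>EE. e \<subseteq> S} \<le> (\<Sum>v\<in>S. k * wt v)"
proof -
  have fS: "finite S" using S finV finite_subset by blast
  have "{e\<in>EE. e \<subseteq> S} \<subseteq> {B. B \<subseteq> S \<and> card B = 2}" using EE_sub by blast
  hence c1: "card {e\<in>EE. e \<subseteq> S} \<le> card S choose 2"
    using card_mono[of "{B. B \<subseteq> S \<and> card B = 2}"] n_subsets[OF fS] fS by simp
  define Dbl where "Dbl = {v\<in>V. cnt v = 2}"
  have fD: "finite Dbl" unfolding Dbl_def using finV by simp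
  have "2 * card Dbl = (\<Sum>v\<in>Dbl. cnt v)" unfolding Dbl_def by simp
  also have "\<dots> \<le> (\<Sum>v\<in>V. cnt v)" unfolding Dbl_def by (rule sum_mono2[OF finV]) auto
  finally have cD: "card Dbl \<le> 1" using sum_cnt_V by simp
  have w1: "wt v \<ge> 1" if "v \<notin> Dbl" "v \<in> V" for v
  proof (cases "v \<in> A2")
    case True
    have "cnt v \<noteq> 2" using that unfolding Dbl_def by blast
    thus ?thesis using True cnt_le2[of v] unfolding wt_def by simp
  next
    case False
    hence "v \<notin> Cs" unfolding A2_def by blast
    thus ?thesis using False cnt_out unfolding wt_def by simp
  qed
  have "card (S - Dbl) = (\<Sum>v\<in>S - Dbl. 1)" by simp
  also have "\<dots> \<le> (\<Sum>v\<in>S - Dbl. wt v)"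
  proof (rule sum_mono)
    fix v assume "v \<in> S - Dbl" thus "1 \<le> wt v" using w1 S by blast
  qed
  also have "\<dots> \<le> (\<Sum>v\<in>S. wt v)" by (rule sum_mono2[OF fS]) auto
  finally have "card S - 1 \<le> (\<Sum>v\<in>S. wt v)"
    using diff_card_le_card_Diff[OF fD, of S] cD by linarith
  hence c2: "k * (card S - 1) \<le> (\<Sum>v\<in>S. k * wt v)" by (simp add: sum_distrib_left[symmetric])
  have "2 * (card S choose 2) = card S * (card S - 1)" by (rule choose2_twice)
  also have "\<dots> \<le> 2 * k * (card S - 1)" using s by simp
  finally have "card S choose 2 \<le> k * (card S - 1)" by simp
  thus ?thesis using c1 c2 by linarith
qed

lemma star_meet:
  assumes "\<sigma> \<in> A"
  shows "card {x\<in>\<sigma>. x \<inter> T \<noteq> {}} \<le> (if cen \<sigma> \<in> T then k else 0) + card {v\<in>T. cen \<sigma> \<notin> T \<and> v \<in> lvs \<sigma>}"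
proof (cases "cen \<sigma> \<in> T")
  case True
  have "card {x\<in>\<sigma>. x \<inter> T \<noteq> {}} \<le> card \<sigma>" using fin_star[OF assms] by (simp add: card_mono)
  thus ?thesis using True card_star[OF assms] by simp
next
  case False
  have "{x\<in>\<sigma>. x \<inter> T \<noteq> {}} \<subseteq> (\<lambda>y. {cen \<sigma>, y}) ` {v\<in>T. cen \<sigma> \<notin> T \<and> v \<in> lvs \<sigma>}"
  proof
    fix x assume x: "x \<in> {x\<in>\<sigma>. x \<inter> T \<noteq> {}}"
    then obtain y where y: "y \<in> lvs \<sigma>" "x = {cen \<sigma>, y}" using mem_iff[OF assms] by blast
    hence "y \<in> T" using x False by auto
    thus "x \<in> (\<lambda>y. {cen \<sigma>, y}) ` {v\<in>T. cen \<sigma> \<notin> T \<and> v \<in> lvs \<sigma>}" using y False by blast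
  qed
  moreover have "finite {v\<in>T. cen \<sigma> \<notin> T \<and> v \<in> lvs \<sigma>}"
    using st_fin[OF assms] by (metis (no_types, lifting) finite_subset mem_Collect_eq subsetI)
  ultimately have "card {x\<in>\<sigma>. x \<inter> T \<noteq> {}} \<le> card {v\<in>T. cen \<sigma> \<notin> T \<and> v \<in> lvs \<sigma>}"
    by (meson card_image_le card_mono finite_imageI le_trans)
  thus ?thesis using False by simp
qed

lemma inj_cen:
  assumes "v \<in> T"
  shows "card {\<sigma>\<in>A. cen \<sigma> \<notin> T \<and> v \<in> lvs \<sigma>} \<le> card (A2 - T)"
proof -
  have "inj_on cen {\<sigma>\<in>A. cen \<sigma> \<notin> T \<and> v \<in> lvs \<sigma>}"
  proof (rule inj_onI)
    fix x y assume "x \<in> {\<sigma>\<in>A. cen \<sigma> \<notin> T \<and> v \<in> lvs \<sigma>}" "y \<in> {\<sigma>\<in>A. cen \<sigma> \<notin> T \<and> v \<in> lvs \<sigma>}" "cen x = cen y"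
    thus "x = y" using same_center[of x y v] by blast
  qed
  hence c1: "card (cen ` {\<sigma>\<in>A. cen \<sigma> \<notin> T \<and> v \<in> lvs \<sigma>}) = card {\<sigma>\<in>A. cen \<sigma> \<notin> T \<and> v \<in> lvs \<sigma>}"
    by (rule card_image)
  have sub: "cen ` {\<sigma>\<in>A. cen \<sigma> \<notin> T \<and> v \<in> lvs \<sigma>} \<subseteq> A2 - T"
    unfolding A2_def Cs_def by blast
  have "card (cen ` {\<sigma>\<in>A. cen \<sigma> \<notin> T \<and> v \<in> lvs \<sigma>}) \<le> card (A2 - T)"
    using fin_A2 sub by (intro card_mono) auto
  thus ?thesis using c1 by simp
qed

lemma key_large:
  assumes T: "T \<subseteq> V" and t: "card T \<le> n - 2*k - 1"
  shows "(\<Sum>v\<in>T. k * wt v) \<le> card {e\<in>EE. e \<inter> T \<noteq> {}}"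
proof -
  have fT: "finite T" using T finV finite_subset by blast
  define a where "a = card (T \<inter> A2)"
  define b where "b = card (T - A2)"
  have tab: "card T = a + b"
  proof -
    have "card ((T \<inter> A2) \<union> (T - A2)) = card (T \<inter> A2) + card (T - A2)"
      by (rule card_Un_disjoint) (use fT in auto)
    moreover have "(T \<inter> A2) \<union> (T - A2) = T" by blast
    ultimately show ?thesis unfolding a_def b_def by simp
  qed
  define cT where "cT = card {\<sigma>\<in>A. cen \<sigma> \<in> T}"
  define Lam where "Lam = (\<Sum>\<sigma>\<in>A. card {v\<in>T. cen \<sigma> \<notin> T \<and> v \<in> lvs \<sigma>})"
  have Lam2: "Lam = (\<Sum>v\<in>T. card {\<sigma>\<in>A. cen \<sigma> \<notin> T \<and> v \<in> lvs \<sigma>})"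
    unfolding Lam_def by (rule swap_card[OF finA fT])
  have LamB1: "Lam \<le> 2*a + 3*b"
  proof -
    have "Lam \<le> (\<Sum>v\<in>T. lc v)" unfolding Lam2 lc_def
      by (rule sum_mono) (rule card_mono, use finA in auto)
    also have "\<dots> \<le> (\<Sum>v\<in>T. (if v \<in> A2 then 2 else 3))"
      by (rule sum_mono) (use lc_A2 lc_le3 in auto)
    also have "\<dots> = 2*a + 3*b"
    proof -
      have "(\<Sum>v\<in>T. (if v \<in> A2 then 2 else 3::nat)) = (\<Sum>v\<in>T \<inter> A2. (if v \<in> A2 then 2 else 3::nat)) + (\<Sum>v\<in>T - A2. (if v \<in> A2 then 2 else 3::nat))"
        using sum.Int_Diff[OF fT] by blast
      thus ?thesis unfolding a_def b_def by simp
    qed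
    finally show ?thesis .
  qed
  have LamB2: "Lam \<le> (a+b) * (ee - a)"
  proof -
    have "Lam \<le> (\<Sum>v\<in>T. card (A2 - T))" unfolding Lam2 by (rule sum_mono) (rule inj_cen)
    also have "card (A2 - T) = ee - a"
      using card_Diff_subset_Int[of A2 T] fin_A2 card_A2 unfolding a_def by (simp add: Int_commute)
    finally show ?thesis using tab by simp
  qed
  have arith: "k*(2*a+b) + Lam + ((n - (a+b)) choose 2) \<le> n choose 2"
  proof -
    have "n \<ge> 2*k+4 \<or> (k = 3 \<and> n = 9)" using adm_cases[OF k3 adm nlo] .
    thus ?thesis
    proof
      assume "n \<ge> 2*k+4"
      thus ?thesis using main_ineq[OF k3 _ _ LamB1] t tab by simp
    next
      assume kn: "k = 3 \<and> n = 9"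
      hence "ee = 3" using NN_eq kNN by (simp add: choose_two)
      moreover have "(9::nat) choose 2 = 36" by (simp add: choose_two)
      ultimately show ?thesis using small_ineq[of a b Lam] kn LamB1 LamB2 t tab by simp
    qed
  qed
  define KT where "KT = {e\<in>complete_edges V. e \<inter> T \<noteq> {}}"
  define AT where "AT = {e\<in>\<Union>A. e \<inter> T \<noteq> {}}"
  have cKT: "card KT = (n choose 2) - ((n - card T) choose 2)"
  proof -
    have "complete_edges V - KT = {B. B \<subseteq> V - T \<and> card B = 2}"
      unfolding KT_def complete_edges_eq by blast
    hence "card (complete_edges V - KT) = (n - card T) choose 2"
      using n_subsets[of "V - T" 2] finV card_Diff_subset[OF fT T] cardV by simp
    moreover have "KT \<subseteq> complete_edges V" unfolding KT_def by blast
    ultimately show ?thesis using card_Diff_subset[of KT "complete_edges V"] fin_K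
      card_complete_edges[OF finV] cardV
      by (metis card_Diff_subset diff_diff_cancel card_mono finite_subset)
  qed
  have cAT: "card AT \<le> k * cT + Lam"
  proof -
    have "AT = (\<Union>\<sigma>\<in>A. {x\<in>\<sigma>. x \<inter> T \<noteq> {}})" unfolding AT_def by blast
    hence "card AT \<le> (\<Sum>\<sigma>\<in>A. card {x\<in>\<sigma>. x \<inter> T \<noteq> {}})" using card_UN_le[OF finA] by simp
    also have "\<dots> \<le> (\<Sum>\<sigma>\<in>A. (if cen \<sigma> \<in> T then k else 0) + card {v\<in>T. cen \<sigma> \<notin> T \<and> v \<in> lvs \<sigma>})"
      by (rule sum_mono) (rule star_meet)
    also have "\<dots> = (\<Sum>\<sigma>\<in>A. (if cen \<sigma> \<in> T then k else 0)) + Lam"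
      unfolding Lam_def by (simp add: sum.distrib)
    also have "(\<Sum>\<sigma>\<in>A. (if cen \<sigma> \<in> T then k else 0)) = k * cT"
      unfolding cT_def card_as_sum[OF finA, of "\<lambda>\<sigma>. cen \<sigma> \<in> T"] sum_distrib_left
      by (rule sum.cong) auto
    finally show ?thesis .
  qed
  have "{e\<in>EE. e \<inter> T \<noteq> {}} = KT - AT" unfolding EE_def KT_def AT_def by blast
  hence cM: "card {e\<in>EE. e \<inter> T \<noteq> {}} \<ge> card KT - card AT"
  proof -
    have "finite AT" unfolding AT_def using finite_subset[OF UA_sub fin_K] by (rule finite_subset[rotated]) blast
    thus ?thesis using diff_card_le_card_Diff[of AT KT] \<open>{e\<in>EE. e \<inter> T \<noteq> {}} = KT - AT\<close> by simp
  qed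
  have sT: "(\<Sum>v\<in>T. k * wt v) + k * cT = k * (2*a + b)"
  proof -
    have "(\<Sum>v\<in>T. wt v) + cT = 2*a + b" using sum_wt[OF fT] unfolding a_def b_def cT_def by simp
    hence "k * ((\<Sum>v\<in>T. wt v) + cT) = k * (2*a + b)" by simp
    thus ?thesis by (simp add: sum_distrib_left add_mult_distrib2)
  qed
  have gen: "\<And>M KT AT X Y Z L C P::nat. KT - AT \<le> M \<Longrightarrow> AT \<le> Y + L \<Longrightarrow> KT = P - C \<Longrightarrow> X + Y = Z
      \<Longrightarrow> Z + L + C \<le> P \<Longrightarrow> X \<le> M" by arith
  show ?thesis using tab by (intro gen[OF cM cAT cKT sT]) (use arith in simp)
qed


lemma cond_all: "\<forall>S\<subseteq>V. card {e\<in>EE. e \<subseteq> S} \<le> (\<Sum>v\<in>S. k * wt v)"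
proof (intro allI impI)
  fix S assume S: "S \<subseteq> V"
  show "card {e\<in>EE. e \<subseteq> S} \<le> (\<Sum>v\<in>S. k * wt v)"
  proof (cases "card S \<le> 2*k")
    case True thus ?thesis using cond_small[OF S] by simp
  next
    case False
    define T where "T = V - S"
    have TV: "T \<subseteq> V" unfolding T_def by blast
    have fS: "finite S" using S finV finite_subset by blast
    have cT: "card T = n - card S" unfolding T_def using card_Diff_subset[OF fS S] cardV by simp
    hence t: "card T \<le> n - 2*k - 1" using False by simp
    have key: "(\<Sum>v\<in>T. k * wt v) \<le> card {e\<in>EE. e \<inter> T \<noteq> {}}" by (rule key_large[OF TV t])
    have finEE: "finite EE" unfolding EE_def using fin_K by simp
    have eq: "{e\<in>EE. e \<subseteq> S} = EE - {e\<in>EE. e \<inter> T \<noteq> {}}"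
      using EE_sub unfolding T_def by blast
    have c1: "card {e\<in>EE. e \<subseteq> S} = card EE - card {e\<in>EE. e \<inter> T \<noteq> {}}"
      unfolding eq using finEE by (intro card_Diff_subset) auto
    have "(\<Sum>v\<in>V. k * wt v) = (\<Sum>v\<in>S. k * wt v) + (\<Sum>v\<in>T. k * wt v)"
      unfolding T_def using sum.subset_diff[OF S finV, of "\<lambda>v. k * wt v"] by (simp add: add.commute)
    hence "(\<Sum>v\<in>S. k * wt v) = card EE - (\<Sum>v\<in>T. k * wt v)" using sum_d_V by simp
    thus ?thesis using c1 key by simp
  qed
qed

end

theorem lemma10:
  fixes k n :: nat and V :: "'a set" and A :: "'a set set set"
  assumes "k \<ge> 3" and "n > 0" and "admissible k n"
    and "2 * k + 1 < n" and "n \<le> 3 * k"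
    and "finite V" and "card V = n"
    and "partial_kstar_design k V A" and "card A = 3"
  shows "completable k V A"
proof -
  have isk: "\<forall>\<sigma>\<in>A. is_kstar k V \<sigma>" and dA: "pairwise disjnt A"
    using assms(8) unfolding partial_kstar_design_def by auto
  have "\<forall>\<sigma>\<in>A. \<exists>c. \<exists>L. c \<in> V \<and> L \<subseteq> V - {c} \<and> card L = k \<and> finite L \<and> \<sigma> = (\<lambda>x. {c, x}) ` L"
    using isk unfolding is_kstar_def by blast
  then obtain cen where "\<forall>\<sigma>\<in>A. \<exists>L. cen \<sigma> \<in> V \<and> L \<subseteq> V - {cen \<sigma>} \<and> card L = k \<and> finite L \<and> \<sigma> = (\<lambda>x. {cen \<sigma>, x}) ` L"
    by (rule bchoice[THEN exE]) blast
  then obtain lvs where cl: "\<forall>\<sigma>\<in>A. cen \<sigma> \<in> V \<and> lvs \<sigma> \<subseteq> V - {cen \<sigma>} \<and> card (lvs \<sigma>) = k \<and> finite (lvs \<sigma>) \<and> \<sigma> = (\<lambda>x. {cen \<sigma>, x}) ` lvs \<sigma>"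
    by (rule bchoice[THEN exE]) blast
  have cl': "\<And>\<sigma>. \<sigma> \<in> A \<Longrightarrow> cen \<sigma> \<in> V \<and> lvs \<sigma> \<subseteq> V - {cen \<sigma>} \<and> card (lvs \<sigma>) = k \<and> finite (lvs \<sigma>) \<and> \<sigma> = (\<lambda>x. {cen \<sigma>, x}) ` lvs \<sigma>"
    by (rule bspec[OF cl])
  interpret C: cfg k n V A cen lvs
  proof
    show "3 \<le> k" by fact
    show "(n choose 2) mod k = 0" using assms(3) unfolding admissible_def .
    show "2 * k + 1 < n" by fact
    show "n \<le> 3 * k" by fact
    show "finite V" by fact
    show "card V = n" by fact
    show "pairwise disjnt A" by fact
    show "card A = 3" by fact
    show "\<And>\<sigma>. \<sigma> \<in> A \<Longrightarrow> cen \<sigma> \<in> V" using cl' by (rule conjunct1)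
    show "\<And>\<sigma>. \<sigma> \<in> A \<Longrightarrow> lvs \<sigma> \<subseteq> V - {cen \<sigma>}" using cl'[THEN conjunct2] by (rule conjunct1)
    show "\<And>\<sigma>. \<sigma> \<in> A \<Longrightarrow> card (lvs \<sigma>) = k" using cl'[THEN conjunct2, THEN conjunct2] by (rule conjunct1)
    show "\<And>\<sigma>. \<sigma> \<in> A \<Longrightarrow> finite (lvs \<sigma>)" using cl'[THEN conjunct2, THEN conjunct2, THEN conjunct2] by (rule conjunct1)
    show "\<And>\<sigma>. \<sigma> \<in> A \<Longrightarrow> \<sigma> = (\<lambda>x. {cen \<sigma>, x}) ` lvs \<sigma>" using cl'[THEN conjunct2, THEN conjunct2, THEN conjunct2] by (rule conjunct2)
  qed
  have finEE: "finite C.EE" unfolding C.EE_def using C.fin_K by simp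
  have EEe: "C.EE \<subseteq> edgeset V" unfolding C.EE_def complete_edges_def edgeset_def by blast
  obtain h where h: "\<forall>e\<in>C.EE. h e \<in> e" "\<forall>w\<in>V. card {e\<in>C.EE. h e = w} = k * C.wt w"
    using hakimi_aux[OF finEE assms(6) EEe C.sum_d_V C.cond_all] by blast
  show ?thesis
    by (rule complete_from_orient[OF assms(6) assms(8) C.UA_sub, of h C.wt]) (use h in \<open>simp_all add: C.EE_def\<close>)
qed

end
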